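(* Let $F$ attain its minimum $F^*$ at some $x^*\in\operatorname{dom}h$. Let $x_0\in\mathbb{E}$, let $(a_k)_{k\ge1}$ be positive numbers and $(\delta_k)_{k\ge1}$ nonnegative numbers. Suppose that for each $k\ge0$, points $x_{k+1}$ and vectors $g_{k+1}\in\partial\Phi_{k+1}(x_{k+1})$ are given, where $\Phi_{k+1}(x)=a_{k+1}F(x)+\frac12\|x-x_k\|^2$, such that $\|g_{k+1}\|_*\le\delta_{k+1}$, and set $F'(x_{k+1})=\frac1{a_{k+1}}\big(g_{k+1}-B(x_{k+1}-x_k)\big)\in\partial F(x_{k+1})$. Then for every $k\ge1$, $$\sum_{i=1}^ka_i(F(x_i)-F^* )+\frac12\sum_{i=1}^ka_i^2\|F'(x_i)\|_*^2+\frac12\|x_k-x^*\|^2\le\frac12\Big(\|x_0-x^*\|+\sum_{i=1}^k\delta_i\Big)^2.$$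
   Context: $\mathbb{E}$ is a finite-dimensional real vector space with dual $\mathbb{E}^*$; $B:\mathbb{E}\to\mathbb{E}^*$ is a fixed self-adjoint positive-definite operator, $\|x\|=\langle Bx,x\rangle^{1/2}$, $\|g\|_*=\langle g,B^{-1}g\rangle^{1/2}$. $F=f+h$, where $h:\mathbb{E}\to\mathbb{R}\cup\{+\infty\}$ is proper closed convex and $f$ is convex and $p$ times differentiable ($p\ge2$) on an open convex set containing $\operatorname{dom}h$ with Lipschitz continuous $p$-th derivative on $\operatorname{dom}h$. $\partial$ denotes the convex subdifferential. *)

theory Defs
  imports "HOL-Analysis.Analysis" "HOL-Library.Extended_Real"
begin

text \<open>The space E is modelled as a Euclidean space 'a; its dual is identified with 'a
  via the standard inner product, so the pairing <g,x> is g \<bullet> x and B : E \<rightarrow> E* is a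
  linear map 'a \<Rightarrow> 'a.\<close>

definition self_adjoint_pd :: "('a::euclidean_space \<Rightarrow> 'a) \<Rightarrow> bool" where
  "self_adjoint_pd B \<longleftrightarrow> linear B \<and> (\<forall>x y. B x \<bullet> y = x \<bullet> B y) \<and> (\<forall>x. x \<noteq> 0 \<longrightarrow> B x \<bullet> x > 0)"

definition normB :: "('a::euclidean_space \<Rightarrow> 'a) \<Rightarrow> 'a \<Rightarrow> real" where
  "normB B x = sqrt (B x \<bullet> x)"

definition dualnormB :: "('a::euclidean_space \<Rightarrow> 'a) \<Rightarrow> 'a \<Rightarrow> real" where
  "dualnormB B g = sqrt (g \<bullet> inv B g)"

definition edom :: "('a \<Rightarrow> ereal) \<Rightarrow> 'a set" where
  "edom h = {x. h x < \<infinity>}"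

definition proper_closed_convex :: "('a::euclidean_space \<Rightarrow> ereal) \<Rightarrow> bool" where
  "proper_closed_convex h \<longleftrightarrow>
     (\<forall>x. h x \<noteq> -\<infinity>) \<and> (\<exists>x. h x < \<infinity>) \<and>
     convex {(x, t::real). h x \<le> ereal t} \<and> closed {(x, t::real). h x \<le> ereal t}"

definition subdiff :: "('a::euclidean_space \<Rightarrow> ereal) \<Rightarrow> 'a \<Rightarrow> 'a set" where
  "subdiff \<phi> x = {g. \<bar>\<phi> x\<bar> \<noteq> \<infinity> \<and> (\<forall>y. \<phi> y \<ge> \<phi> x + ereal (g \<bullet> (y - x)))}"

text \<open>Iterated directional (Frechet) derivatives: Dk k f x hs = D^k f(x)[hs 0, ..., hs (k-1)].\<close>
fun Dk :: "nat \<Rightarrow> ('a::euclidean_space \<Rightarrow> real) \<Rightarrow> 'a \<Rightarrow> (nat \<Rightarrow> 'a) \<Rightarrow> real" where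
  "Dk 0 f x hs = f x"
| "Dk (Suc k) f x hs = frechet_derivative (\<lambda>y. Dk k f y hs) (at x) (hs k)"

definition p_smooth_lipschitz ::
  "('a::euclidean_space \<Rightarrow> 'a) \<Rightarrow> nat \<Rightarrow> ('a \<Rightarrow> real) \<Rightarrow> 'a set \<Rightarrow> 'a set \<Rightarrow> bool" where
  "p_smooth_lipschitz B p f U S \<longleftrightarrow>
     (\<forall>k<p. \<forall>hs. \<forall>x\<in>U. (\<lambda>y. Dk k f y hs) differentiable (at x)) \<and>
     (\<exists>L. \<forall>x\<in>S. \<forall>y\<in>S. \<forall>hs. (\<forall>i<p. normB B (hs i) \<le> 1) \<longrightarrow>
          \<bar>Dk p f x hs - Dk p f y hs\<bar> \<le> L * normB B (x - y))"

end

theory Submission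
  imports Defs
begin

locale Bctx = fixes B :: "'a::euclidean_space \<Rightarrow> 'a" assumes B: "self_adjoint_pd B"
begin
lemma lin: "linear B" using B by (simp add: self_adjoint_pd_def)
lemma sym: "B x \<bullet> y = x \<bullet> B y" using B by (simp add: self_adjoint_pd_def)
lemma qnn: "0 \<le> B x \<bullet> x"
proof (cases "x = 0")
  case True thus ?thesis using linear_0[OF lin] by simp
next case False thus ?thesis using B unfolding self_adjoint_pd_def by (meson less_imp_le)
qed
lemma q0: "B x \<bullet> x = 0 \<Longrightarrow> x = 0" using B by (force simp: self_adjoint_pd_def)
lemma injB: "inj B"
proof (rule injI)
  fix x y assume "B x = B y"
  hence "B (x - y) = 0" using linear_diff[OF lin] by simp
  hence "B (x-y) \<bullet> (x-y) = 0" by simp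
  thus "x = y" using q0 by fastforce
qed
lemma surjB: "surj B" using linear_inj_imp_surj[OF lin injB] .
lemma Binv: "B (inv B g) = g" using surjB by (simp add: surj_f_inv_f)
lemma invB: "inv B (B v) = v" using injB by (simp add: inv_f_f)
lemma nB2: "(normB B v)^2 = B v \<bullet> v" using qnn by (simp add: normB_def)
lemma dB2: "(dualnormB B g)^2 = g \<bullet> inv B g"
proof -
  have "g \<bullet> inv B g = B (inv B g) \<bullet> inv B g" by (simp add: Binv)
  thus ?thesis using qnn[of "inv B g"] by (simp add: dualnormB_def)
qed
lemma nBnn: "0 \<le> normB B v" using qnn by (simp add: normB_def)
lemma dBnn: "0 \<le> dualnormB B v" using qnn[of "inv B v"] by (simp add: dualnormB_def Binv)
lemma Badd: "B (u + v) = B u + B v" using linear_add[OF lin] .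
lemma Bdiff: "B (u - v) = B u - B v" using linear_diff[OF lin] .
lemma Bscale: "B (c *\<^sub>R u) = c *\<^sub>R B u" using linear_scale[OF lin] .
lemma invscale: "inv B (c *\<^sub>R g) = c *\<^sub>R inv B g"
  by (metis Binv Bscale invB)
lemma invdiff: "inv B (g - h) = inv B g - inv B h"
  by (metis Binv Bdiff invB)

lemma CS: "B u \<bullet> v \<le> normB B u * normB B v"
proof -
  let ?nu = "normB B u" and ?nv = "normB B v"
  have "0 \<le> B (?nv *\<^sub>R u - ?nu *\<^sub>R v) \<bullet> (?nv *\<^sub>R u - ?nu *\<^sub>R v)" by (rule qnn)
  also have "\<dots> = ?nv^2 * (B u \<bullet> u) - 2 * ?nu * ?nv * (B u \<bullet> v) + ?nu^2 * (B v \<bullet> v)"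
    by (simp add: Bdiff Bscale inner_diff_left inner_diff_right sym[of v u] power2_eq_square algebra_simps inner_commute[of v "B u"])
  also have "\<dots> = 2 * ?nu * ?nv * (?nu * ?nv - B u \<bullet> v)"
    by (simp add: nB2[symmetric] power2_eq_square algebra_simps)
  finally have *: "0 \<le> 2 * ?nu * ?nv * (?nu * ?nv - B u \<bullet> v)" .
  show ?thesis
  proof (cases "?nu * ?nv = 0")
    case True
    hence "u = 0 \<or> v = 0" using q0 nB2 by (metis mult_eq_0_iff power2_eq_square)
    thus ?thesis using True linear_0[OF lin] by (auto simp: inner_commute)
  next
    case False
    hence "0 < 2 * ?nu * ?nv" using nBnn[of u] nBnn[of v] by (simp add: less_le)
    with * show ?thesis by (simp add: zero_le_mult_iff)
  qed
qed

lemma CSd: "g \<bullet> v \<le> dualnormB B g * normB B v"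
proof -
  have "g \<bullet> v = B (inv B g) \<bullet> v" by (simp add: Binv)
  also have "\<dots> \<le> normB B (inv B g) * normB B v" by (rule CS)
  also have "normB B (inv B g) = dualnormB B g" by (simp add: normB_def dualnormB_def Binv)
  finally show ?thesis .
qed
end

lemma lim_lemma:
  fixes K L M :: real
  assumes "\<And>t. 0 < t \<Longrightarrow> t \<le> 1 \<Longrightarrow> K \<le> L + t * M" "0 \<le> M"
  shows "K \<le> L"
proof (rule ccontr)
  assume "\<not> K \<le> L"
  hence e: "0 < K - L" by simp
  define t where "t = min 1 ((K - L) / (2 * (M + 1)))"
  have t0: "0 < t" using e assms(2) by (simp add: t_def)
  have t1: "t \<le> 1" by (simp add: t_def)
  have "t * M \<le> (K - L) / (2 * (M + 1)) * M"
    using assms(2) by (intro mult_right_mono) (auto simp: t_def)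
  also have "\<dots> < K - L"
  proof -
    have "0 \<le> (K - L) * M" using e assms(2) by simp
    thus ?thesis using e assms(2) by (simp add: field_simps algebra_simps)
  qed
  finally show False using assms(1)[OF t0 t1] by simp
qed

context Bctx begin
lemma qexp: "B (u + t *\<^sub>R d) \<bullet> (u + t *\<^sub>R d) = B u \<bullet> u + 2 * t * (B u \<bullet> d) + t^2 * (B d \<bullet> d)"
  by (simp add: Badd Bscale inner_add_left inner_add_right sym[of d u] power2_eq_square algebra_simps inner_commute[of d "B u"])

lemma step:
  fixes f :: "'a \<Rightarrow> real" and h :: "'a \<Rightarrow> ereal"
  assumes Fdef: "F = (\<lambda>y. ereal (f y) + h y)"
    and h: "proper_closed_convex h"
    and U: "edom h \<subseteq> U"
    and fconv: "convex_on U f"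
    and A: "A > 0"
    and gs: "g \<in> subdiff (\<lambda>y. ereal A * F y + ereal (1/2 * (normB B (y - c))\<^sup>2)) x"
    and y: "y \<in> edom h"
  shows "\<exists>Fx Fy. F x = ereal Fx \<and> F y = ereal Fy \<and>
     A * (Fx - Fy) + 1/2 * (dualnormB B (g - B (x - c)))^2 + 1/2 * (normB B (x - y))^2
       \<le> 1/2 * (normB B (c - y))^2 + g \<bullet> (c - y) + 1/2 * (dualnormB B g)^2"
proof -
  define \<Phi> where "\<Phi> = (\<lambda>y. ereal A * F y + ereal (1/2 * (normB B (y - c))\<^sup>2))"
  have fin: "\<bar>\<Phi> x\<bar> \<noteq> \<infinity>" and sg: "\<And>z. \<Phi> z \<ge> \<Phi> x + ereal (g \<bullet> (z - x))"
    using gs by (auto simp: subdiff_def \<Phi>_def)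
  have hninf: "\<And>z. h z \<noteq> -\<infinity>" using h by (simp add: proper_closed_convex_def)
  have "h x \<noteq> \<infinity>"
  proof
    assume "h x = \<infinity>"
    hence "F x = \<infinity>" by (simp add: Fdef)
    hence "\<Phi> x = \<infinity>" using A by (simp add: \<Phi>_def)
    thus False using fin by simp
  qed
  then obtain hx where hx: "h x = ereal hx" using hninf[of x] by (cases "h x") auto
  have "h y \<noteq> \<infinity>" using y by (simp add: edom_def)
  then obtain hy where hy: "h y = ereal hy" using hninf[of y] by (cases "h y") auto
  have xU: "x \<in> U" using U hx by (auto simp: edom_def)
  have yU: "y \<in> U" using U y by auto
  define Fx where "Fx = f x + hx"
  define Fy where "Fy = f y + hy"
  have Fx: "F x = ereal Fx" by (simp add: Fdef hx Fx_def)
  have Fy: "F y = ereal Fy" by (simp add: Fdef hy Fy_def)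
  let ?q = "\<lambda>w. B w \<bullet> w"
  define u where "u = x - c"
  define d where "d = y - x"
  have epi: "convex {(x, t::real). h x \<le> ereal t}" using h by (simp add: proper_closed_convex_def)
  have ineq: "g \<bullet> d \<le> A * (Fy - Fx) + B u \<bullet> d + t * (1/2 * ?q d)" if t: "0 < t" "t \<le> 1" for t
  proof -
    define z where "z = (1 - t) *\<^sub>R x + t *\<^sub>R y"
    have fz: "f z \<le> (1 - t) * f x + t * f y"
      using convex_onD[OF fconv, of t x y] t xU yU by (simp add: z_def)
    have "(1 - t) *\<^sub>R (x, hx) + t *\<^sub>R (y, hy) \<in> {(x, t::real). h x \<le> ereal t}"
      by (rule convexD[OF epi]) (use t hx hy in auto)
    hence hz: "h z \<le> ereal ((1 - t) * hx + t * hy)" by (simp add: z_def)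
    have "F z \<le> ereal ((1 - t) * Fx + t * Fy)"
    proof -
      have "F z = ereal (f z) + h z" by (simp add: Fdef)
      also have "\<dots> \<le> ereal ((1 - t) * f x + t * f y) + ereal ((1 - t) * hx + t * hy)"
        using fz hz by (intro add_mono) auto
      also have "\<dots> = ereal ((1 - t) * Fx + t * Fy)" by (simp add: Fx_def Fy_def algebra_simps)
      finally show ?thesis .
    qed
    hence "ereal A * F z \<le> ereal (A * ((1 - t) * Fx + t * Fy))"
      using A by (metis ereal_mult_left_mono less_imp_le times_ereal.simps(1) ereal_less_eq(5))
    hence "\<Phi> z \<le> ereal (A * ((1 - t) * Fx + t * Fy) + 1/2 * (normB B (z - c))\<^sup>2)"
      unfolding \<Phi>_def by (metis add_right_mono plus_ereal.simps(1))
    moreover have "\<Phi> x = ereal (A * Fx + 1/2 * (normB B (x - c))\<^sup>2)"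
      by (simp add: \<Phi>_def Fx)
    ultimately have "ereal (A * Fx + 1/2 * (normB B (x - c))\<^sup>2 + g \<bullet> (z - x))
       \<le> ereal (A * ((1 - t) * Fx + t * Fy) + 1/2 * (normB B (z - c))\<^sup>2)"
      using sg[of z] by (metis order_trans plus_ereal.simps(1))
    hence r: "A * Fx + 1/2 * ?q u + g \<bullet> (z - x) \<le> A * ((1 - t) * Fx + t * Fy) + 1/2 * ?q (z - c)"
      by (simp add: nB2 u_def)
    have zx: "z - x = t *\<^sub>R d" by (simp add: z_def d_def algebra_simps)
    have zc: "z - c = u + t *\<^sub>R d" by (simp add: z_def d_def u_def algebra_simps)
    have "t * (g \<bullet> d) \<le> t * (A * (Fy - Fx) + B u \<bullet> d + t * (1/2 * ?q d))"
      using r unfolding zx zc qexp by (simp add: algebra_simps power2_eq_square)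
    thus ?thesis using t by simp
  qed
  have key: "g \<bullet> d \<le> A * (Fy - Fx) + B u \<bullet> d"
    by (rule lim_lemma[OF ineq]) (use qnn in auto)
  have G: "(dualnormB B (g - B u))^2 = (dualnormB B g)^2 - 2 * (g \<bullet> u) + ?q u"
    unfolding dB2 invdiff invB
    by (simp add: inner_diff_left inner_diff_right sym[of u "inv B g"] Binv inner_commute[of u g])
  have xy: "?q (x - y) = ?q d"
    by (metis d_def inner_minus_left inner_minus_right linear_neg lin minus_diff_eq minus_minus)
  have cy: "?q (c - y) = ?q u + 2 * (B u \<bullet> d) + ?q d"
  proof -
    have "c - y = - (u + 1 *\<^sub>R d)" by (simp add: u_def d_def)
    hence "?q (c - y) = ?q (u + 1 *\<^sub>R d)" by (metis inner_minus_left inner_minus_right linear_neg lin minus_minus)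
    thus ?thesis using qexp[of u 1 d] by simp
  qed
  have gcy: "g \<bullet> (c - y) = - (g \<bullet> u) - g \<bullet> d"
    by (simp add: u_def d_def inner_diff_right)
  have "A * (Fx - Fy) + 1/2 * (dualnormB B (g - B (x - c)))^2 + 1/2 * (normB B (x - y))^2
       \<le> 1/2 * (normB B (c - y))^2 + g \<bullet> (c - y) + 1/2 * (dualnormB B g)^2"
  proof -
    have key': "A * (Fx - Fy) \<le> B u \<bullet> d - g \<bullet> d" using key by (simp add: algebra_simps)
    show ?thesis unfolding nB2 u_def[symmetric] using key' G xy cy gcy by linarith
  qed
  thus ?thesis using Fx Fy by blast
qed
end
theorem theorem5:
  fixes B :: "'a::euclidean_space \<Rightarrow> 'a"
    and f :: "'a \<Rightarrow> real" and h :: "'a \<Rightarrow> ereal" and U :: "'a set" and p :: nat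
    and xstar :: 'a and x g :: "nat \<Rightarrow> 'a" and a \<delta> :: "nat \<Rightarrow> real"
  defines "F \<equiv> (\<lambda>y. ereal (f y) + h y)"
  assumes B: "self_adjoint_pd B"
    and h: "proper_closed_convex h"
    and p: "p \<ge> 2"
    and U: "open U" "convex U" "edom h \<subseteq> U"
    and fconv: "convex_on U f"
    and fsmooth: "p_smooth_lipschitz B p f U (edom h)"
    and xstar_dom: "xstar \<in> edom h"
    and xstar_min: "\<forall>y. F xstar \<le> F y"
    and a_pos: "\<forall>k. a (Suc k) > 0"
    and \<delta>_nonneg: "\<forall>k. \<delta> (Suc k) \<ge> 0"
    and g_sub: "\<forall>k. g (Suc k) \<in> subdiff
                   (\<lambda>y. ereal (a (Suc k)) * F y + ereal (1/2 * (normB B (y - x k))\<^sup>2)) (x (Suc k))"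
    and g_small: "\<forall>k. dualnormB B (g (Suc k)) \<le> \<delta> (Suc k)"
  shows "\<forall>k\<ge>1. let F' = (\<lambda>i. (1 / a i) *\<^sub>R (g i - B (x i - x (i - 1)))) in
           (\<Sum>i=1..k. ereal (a i) * (F (x i) - F xstar))
           + ereal (1/2 * (\<Sum>i=1..k. (a i)\<^sup>2 * (dualnormB B (F' i))\<^sup>2))
           + ereal (1/2 * (normB B (x k - xstar))\<^sup>2)
           \<le> ereal (1/2 * (normB B (x 0 - xstar) + (\<Sum>i=1..k. \<delta> i))\<^sup>2)"
proof -
  interpret Bctx B using B by unfold_locales
  define fr where "fr = (\<lambda>y. real_of_ereal (F y))"
  define r where "r = (\<lambda>k. normB B (x k - xstar))"
  define F' where "F' = (\<lambda>i. (1 / a i) *\<^sub>R (g i - B (x i - x (i - 1))))"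
  define T where "T = (\<lambda>i. a i * (fr (x i) - fr xstar))"
  define Q where "Q = (\<lambda>i. (a i)\<^sup>2 * (dualnormB B (F' i))\<^sup>2)"
  have per: "F (x (Suc k)) = ereal (fr (x (Suc k))) \<and> F xstar = ereal (fr xstar) \<and>
     T (Suc k) + 1/2 * Q (Suc k) + 1/2 * (r (Suc k))^2 \<le> 1/2 * (r k + \<delta> (Suc k))^2
     \<and> 0 \<le> T (Suc k) \<and> 0 \<le> Q (Suc k)" for k
  proof -
    let ?A = "a (Suc k)" and ?g = "g (Suc k)" and ?G = "g (Suc k) - B (x (Suc k) - x k)"
    have A: "?A > 0" using a_pos by simp
    obtain Fx Fy where Fx: "F (x (Suc k)) = ereal Fx" and Fy: "F xstar = ereal Fy" and
      ineq: "?A * (Fx - Fy) + 1/2 * (dualnormB B ?G)^2 + 1/2 * (normB B (x (Suc k) - xstar))^2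
       \<le> 1/2 * (normB B (x k - xstar))^2 + ?g \<bullet> (x k - xstar) + 1/2 * (dualnormB B ?g)^2"
      using step[OF F_def[THEN meta_eq_to_obj_eq] h U(3) fconv A g_sub[rule_format, of k] xstar_dom] by blast
    have fx: "fr (x (Suc k)) = Fx" and fy: "fr xstar = Fy" using Fx Fy by (simp_all add: fr_def)
    have ge: "Fy \<le> Fx" using xstar_min Fx Fy by (metis ereal_less_eq(3))
    have Q: "Q (Suc k) = (dualnormB B ?G)^2"
    proof -
      have "(dualnormB B (F' (Suc k)))^2 = (1 / ?A)^2 * (dualnormB B ?G)^2"
        unfolding dB2 F'_def by (simp add: invscale power2_eq_square)
      thus ?thesis using A by (simp add: Q_def field_simps)
    qed
    have dg: "dualnormB B ?g \<le> \<delta> (Suc k)" using g_small by simp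
    have dgn: "0 \<le> dualnormB B ?g" by (rule dBnn)
    have rn: "0 \<le> r k" by (simp add: r_def nBnn)
    have c1: "?g \<bullet> (x k - xstar) \<le> \<delta> (Suc k) * r k"
      using CSd[of ?g "x k - xstar"] mult_right_mono[OF dg rn] by (simp add: r_def)
    have c2: "(dualnormB B ?g)^2 \<le> (\<delta> (Suc k))^2" using power_mono[OF dg dgn] .
    have sq: "(r k + \<delta> (Suc k))^2 = (r k)^2 + 2 * (\<delta> (Suc k) * r k) + (\<delta> (Suc k))^2"
      by (simp add: power2_sum algebra_simps)
    have "T (Suc k) + 1/2 * Q (Suc k) + 1/2 * (r (Suc k))^2 \<le> 1/2 * (r k + \<delta> (Suc k))^2"
      unfolding Q T_def fx fy sq using ineq c1 c2 by (simp add: r_def)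
    moreover have "0 \<le> T (Suc k)" using ge A by (simp add: T_def fx fy)
    moreover have "0 \<le> Q (Suc k)" by (simp add: Q_def)
    ultimately show ?thesis using Fx Fy fx fy by simp
  qed
  have TQ: "0 \<le> T i \<and> 0 \<le> Q i \<and> 0 \<le> \<delta> i" if "1 \<le> i" for i
  proof -
    have j: "i = Suc (i - 1)" using that by simp
    have "0 \<le> T (Suc (i - 1)) \<and> 0 \<le> Q (Suc (i - 1)) \<and> 0 \<le> \<delta> (Suc (i - 1))"
      using per[of "i - 1"] \<delta>_nonneg by blast
    thus ?thesis using j by metis
  qed
  have main: "(\<Sum>i=1..k. T i) + 1/2 * (\<Sum>i=1..k. Q i) + 1/2 * (r k)^2
      \<le> 1/2 * (r 0 + (\<Sum>i=1..k. \<delta> i))^2" for k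
  proof (induction k)
    case 0 thus ?case by simp
  next
    case (Suc k)
    define S where "S = (\<Sum>i=1..k. T i) + 1/2 * (\<Sum>i=1..k. Q i)"
    define R where "R = r 0 + (\<Sum>i=1..k. \<delta> i)"
    have s1: "0 \<le> (\<Sum>i=1..k. T i)" by (rule sum_nonneg) (use TQ in auto)
    have s2: "0 \<le> (\<Sum>i=1..k. Q i)" by (rule sum_nonneg) (use TQ in auto)
    have s3: "0 \<le> (\<Sum>i=1..k. \<delta> i)" by (rule sum_nonneg) (use TQ in auto)
    have Snn: "0 \<le> S" unfolding S_def using s1 s2 by linarith
    have Rnn: "0 \<le> R" unfolding R_def using s3 nBnn[of "x 0 - xstar"] by (simp add: r_def)
    have IH: "S + 1/2 * (r k)^2 \<le> 1/2 * R^2" using Suc.IH by (simp add: S_def R_def)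
    have "(r k)^2 \<le> R^2" using IH Snn by simp
    hence rR: "r k \<le> R" using Rnn power2_le_imp_le by blast
    have dn: "0 \<le> \<delta> (Suc k)" using \<delta>_nonneg by simp
    have m: "r k * \<delta> (Suc k) \<le> R * \<delta> (Suc k)" using mult_right_mono[OF rR dn] .
    have st: "T (Suc k) + 1/2 * Q (Suc k) + 1/2 * (r (Suc k))^2 \<le> 1/2 * (r k + \<delta> (Suc k))^2"
      using per by blast
    have e1: "(\<Sum>i=1..Suc k. T i) + 1/2 * (\<Sum>i=1..Suc k. Q i) + 1/2 * (r (Suc k))^2
       = S + (T (Suc k) + 1/2 * Q (Suc k) + 1/2 * (r (Suc k))^2)"
      by (simp add: S_def algebra_simps)
    have e2: "(r 0 + (\<Sum>i=1..Suc k. \<delta> i)) = R + \<delta> (Suc k)" by (simp add: R_def)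
    have q1: "(r k + \<delta> (Suc k))^2 = (r k)^2 + 2 * (r k * \<delta> (Suc k)) + (\<delta> (Suc k))^2"
      by (simp add: power2_sum)
    have q2: "(R + \<delta> (Suc k))^2 = R^2 + 2 * (R * \<delta> (Suc k)) + (\<delta> (Suc k))^2"
      by (simp add: power2_sum)
    show ?case unfolding e1 e2 using st IH m q1 q2 by linarith
  qed
  show ?thesis
  proof (intro allI impI)
    fix k :: nat assume k: "k \<ge> 1"
    have "(\<Sum>i=1..k. ereal (a i) * (F (x i) - F xstar)) = (\<Sum>i=1..k. ereal (T i))"
    proof (rule sum.cong)
      fix i assume "i \<in> {1..k}"
      then obtain j where j: "i = Suc j" by (metis atLeastAtMost_iff Suc_pred' not_one_le_zero not_gr0)
      show "ereal (a i) * (F (x i) - F xstar) = ereal (T i)"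
        using per[of j] by (simp add: j T_def)
    qed simp
    also have "\<dots> = ereal (\<Sum>i=1..k. T i)" by simp
    finally have s: "(\<Sum>i=1..k. ereal (a i) * (F (x i) - F xstar)) = ereal (\<Sum>i=1..k. T i)" .
    show "let F' = (\<lambda>i. (1 / a i) *\<^sub>R (g i - B (x i - x (i - 1)))) in
           (\<Sum>i=1..k. ereal (a i) * (F (x i) - F xstar))
           + ereal (1/2 * (\<Sum>i=1..k. (a i)\<^sup>2 * (dualnormB B (F' i))\<^sup>2))
           + ereal (1/2 * (normB B (x k - xstar))\<^sup>2)
           \<le> ereal (1/2 * (normB B (x 0 - xstar) + (\<Sum>i=1..k. \<delta> i))\<^sup>2)"
      unfolding Let_def s F'_def[symmetric] Q_def[symmetric]
      using main[of k] by (simp add: r_def)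
  qed
qed

end
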